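(* For $\pi\in\mathcal{S}_{m,n}$, let $L(\pi)$ be the largest integer $p$ such that there exist indices $i_1<\cdots<i_p$ with $\pi_{i_j}=j$ for all $1\le j\le p$, and let $\mathcal{L}_{m,n}=\mathbb{E}[L(\pi)]$ for $\pi\sim\mathcal{S}_{m,n}$ uniform. If $n$ is sufficiently large in terms of $m$, then \[\mathcal{L}_{m,n}\le m+O(m^{3/4}\log m).\]
   Context: $\mathcal{S}_{m,n}$ is the set of words over the alphabet $[n]=\{1,\dots,n\}$ in which each symbol appears exactly $m$ times; $\pi\sim\mathcal{S}_{m,n}$ denotes a uniformly random element. The implicit constant in $O(\cdot)$ is absolute. *)

theory Defs
  imports Complex_Main "HOL-Library.Sublist"
begin

definition words :: "nat \<Rightarrow> nat \<Rightarrow> nat list set" where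
  "words m n = {w. length w = m * n \<and> set w \<subseteq> {1..n} \<and> (\<forall>i\<in>{1..n}. count_list w i = m)}"

definition Lword :: "nat list \<Rightarrow> nat" where
  "Lword w = Max {p. subseq [1..<p+1] w}"

definition Lexp :: "nat \<Rightarrow> nat \<Rightarrow> real" where
  "Lexp m n = (\<Sum>w\<in>words m n. real (Lword w)) / real (card (words m n))"

end

theory Submission
  imports Defs
begin

fun gr :: "nat list \<Rightarrow> nat list \<Rightarrow> nat" where
  "gr [] w = 0"
| "gr (s#ss) [] = 0"
| "gr (s#ss) (x#xs) = (if x = s then Suc (gr ss xs) else gr (s#ss) xs)"

lemma gr_le: "gr ss w \<le> length ss"
  by (induction ss w rule: gr.induct) auto

lemma gr_subseq: "p \<le> length ss \<Longrightarrow> subseq (take p ss) w \<longleftrightarrow> p \<le> gr ss w"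
proof (induction w arbitrary: ss p)
  case Nil
  then show ?case by (cases ss; cases p) auto
next
  case (Cons x xs)
  show ?case
  proof (cases "ss = []")
    case True then show ?thesis using Cons.prems by simp
  next
    case False
    then obtain t ts where Cons2: "ss = t # ts" by (cases ss) auto
    show ?thesis
    proof (cases p)
      case 0 then show ?thesis by simp
    next
      case (Suc q)
      show ?thesis
      proof (cases "x = t")
        case True
        then show ?thesis using Cons.IH[of q ts] Cons.prems Cons2 Suc by auto
      next
        case False
        then show ?thesis using Cons.IH[of p ss] Cons.prems Cons2 Suc by auto
      qed
    qed
  qed
qed

lemma Lword_gr:
  assumes "set w \<subseteq> {1..n}"
  shows "Lword w = gr [1..<n+1] w"
proof -
  have "{p. subseq [1..<p+1] w} = {..gr [1..<n+1] w}"
  proof (intro set_eqI iffI)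
    fix p assume "p \<in> {p. subseq [1..<p+1] w}"
    hence sp: "subseq [1..<p+1] w" by simp
    have "p \<le> n"
    proof (rule ccontr)
      assume "\<not> p \<le> n"
      hence "p \<in> set [1..<p+1]" by simp
      hence "p \<in> set w" using sp by (meson subseq_order.dual_order.trans subseq_singleton_left set_ConsD
         in_set_conv_decomp subseq_append' subseq_Cons' )
      thus False using assms \<open>\<not> p \<le> n\<close> by auto
    qed
    hence "take p [1..<n+1] = [1..<p+1]" using take_upt[of 1 p "n+1"] by simp
    thus "p \<in> {..gr [1..<n+1] w}" using gr_subseq[of p "[1..<n+1]" w] sp \<open>p \<le> n\<close> by simp
  next
    fix p assume "p \<in> {..gr [1..<n+1] w}"
    hence pl: "p \<le> gr [1..<n+1] w" by simp
    hence "p \<le> n" using gr_le[of "[1..<n+1]" w] by (simp del: upt_Suc)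
    hence "take p [1..<n+1] = [1..<p+1]" using take_upt[of 1 p "n+1"] by simp
    thus "p \<in> {p. subseq [1..<p+1] w}" using gr_subseq[of p "[1..<n+1]" w] pl \<open>p \<le> n\<close> by simp
  qed
  moreover have "Max {..k} = (k::nat)" for k by (rule Max_eqI) auto
  ultimately show ?thesis unfolding Lword_def by (simp del: upt_Suc)
qed


fun mrg :: "nat \<Rightarrow> bool list \<Rightarrow> nat list \<Rightarrow> nat list" where
  "mrg s [] v = v"
| "mrg s (True#bs) v = s # mrg s bs v"
| "mrg s (False#bs) [] = []"
| "mrg s (False#bs) (x#v) = x # mrg s bs v"

fun ht :: "nat \<Rightarrow> bool list \<Rightarrow> bool" where
  "ht _ [] = False"
| "ht 0 (b#bs) = (b \<or> ht 0 bs)"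
| "ht (Suc c) (b#bs) = ht c bs"

fun cp :: "nat \<Rightarrow> bool list \<Rightarrow> nat" where
  "cp _ [] = 0"
| "cp 0 (b#bs) = (if b then 0 else Suc (cp 0 bs))"
| "cp (Suc c) (b#bs) = (if b then 0 else 1) + cp c bs"

fun tf :: "nat \<Rightarrow> bool list \<Rightarrow> nat" where
  "tf _ [] = 0"
| "tf 0 (b#bs) = (if b then count_list bs False else tf 0 bs)"
| "tf (Suc c) (b#bs) = tf c bs"

lemma ht_tf: "ht c bs \<Longrightarrow> cp c bs + tf c bs = count_list bs False"
  by (induction c bs rule: ht.induct) auto

lemma gr_skip: "s \<notin> set ss \<Longrightarrow> gr ss (s#w) = gr ss w"
  by (cases ss) auto

lemma gr_mrg_skip: "s \<notin> set ss \<Longrightarrow> gr ss (mrg s bs v) = gr ss v"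
proof (induction s bs v arbitrary: ss rule: mrg.induct)
  case (2 s bs v) then show ?case by (simp add: gr_skip)
next
  case (4 s bs x v)
  then show ?case by (cases ss) auto
qed auto

lemma gr_mrg:
  assumes "s \<notin> set v" "s \<notin> set ss" "length v = count_list bs False"
  shows "gr (s#ss) (drop c (mrg s bs v)) = (if ht c bs then Suc (gr ss (drop (cp c bs) v)) else 0)"
  using assms
proof (induction bs arbitrary: c v)
  case Nil then show ?case by (cases c) auto
next
  case (Cons b bs)
  show ?case
  proof (cases b)
    case True
    then show ?thesis using Cons by (cases c) (auto simp: gr_mrg_skip)
  next
    case False
    then obtain x v' where v: "v = x # v'" using Cons.prems by (cases v) auto
    then show ?thesis using Cons.IH[of v' 0] Cons.IH[of v'] Cons.prems False by (cases c) auto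
  qed
qed

definition Wd :: "nat \<Rightarrow> nat list \<Rightarrow> nat list set" where
  "Wd m ss = {w. length w = m * length ss \<and> set w \<subseteq> set ss \<and> (\<forall>i\<in>set ss. count_list w i = m)}"

definition Pt :: "nat \<Rightarrow> nat \<Rightarrow> bool list set" where
  "Pt m f = {bs. length bs = f \<and> count_list bs True = m}"

lemma finite_Wd: "finite (Wd m ss)"
  by (rule finite_subset[OF _ finite_lists_length_eq[of "set ss" "m * length ss"]]) (auto simp: Wd_def)

lemma finite_Pt: "finite (Pt m f)"
  by (rule finite_subset[OF _ finite_lists_length_eq[of UNIV f]]) (auto simp: Pt_def)

lemma count_bool: "count_list bs True + count_list bs False = length bs"
  by (induction bs) auto

lemma mrg_len: "length v = count_list bs False \<Longrightarrow> length (mrg s bs v) = length bs"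
  by (induction s bs v rule: mrg.induct) auto

lemma mrg_set: "length v = count_list bs False \<Longrightarrow> set (mrg s bs v) \<subseteq> insert s (set v)"
  by (induction s bs v rule: mrg.induct) auto

lemma mrg_count: "length v = count_list bs False \<Longrightarrow>
   count_list (mrg s bs v) i = (if i = s then count_list bs True else 0) + count_list v i"
  by (induction s bs v rule: mrg.induct) auto

lemma mrg_map: "s \<notin> set v \<Longrightarrow> length v = count_list bs False \<Longrightarrow> map (\<lambda>x. x = s) (mrg s bs v) = bs"
  by (induction s bs v rule: mrg.induct) auto

lemma mrg_filter: "s \<notin> set v \<Longrightarrow> length v = count_list bs False \<Longrightarrow> filter (\<lambda>x. x \<noteq> s) (mrg s bs v) = v"
  by (induction s bs v rule: mrg.induct) auto

lemma mrg_inv: "mrg s (map (\<lambda>x. x = s) w) (filter (\<lambda>x. x \<noteq> s) w) = w"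
  by (induction w) auto

lemma count_map_eq: "count_list (map (\<lambda>x. x = s) w) True = count_list w s"
  by (induction w) auto

lemma count_filter_ne: "i \<noteq> s \<Longrightarrow> count_list (filter (\<lambda>x. x \<noteq> s) w) i = count_list w i"
  by (induction w) auto

lemma len_filter_ne: "length (filter (\<lambda>x. x \<noteq> s) w) + count_list w s = length w"
  by (induction w) auto

lemma bij_Wd:
  assumes "s \<notin> set ss"
  shows "bij_betw (\<lambda>(bs,v). mrg s bs v) (Pt m (m * Suc (length ss)) \<times> Wd m ss) (Wd m (s#ss))"
proof (rule bij_betw_byWitness[where f' = "\<lambda>w. (map (\<lambda>x. x = s) w, filter (\<lambda>x. x \<noteq> s) w)"])
  show "\<forall>a\<in>Pt m (m * Suc (length ss)) \<times> Wd m ss.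
       (map (\<lambda>x. x = s) (case a of (bs, v) \<Rightarrow> mrg s bs v), filter (\<lambda>x. x \<noteq> s) (case a of (bs, v) \<Rightarrow> mrg s bs v)) = a"
  proof
    fix a assume a: "a \<in> Pt m (m * Suc (length ss)) \<times> Wd m ss"
    obtain bs v where [simp]: "a = (bs, v)" by (cases a)
    have l: "length v = count_list bs False" using a count_bool[of bs] by (auto simp: Pt_def Wd_def)
    have "s \<notin> set v" using a assms by (auto simp: Wd_def)
    then show "(map (\<lambda>x. x = s) (case a of (bs, v) \<Rightarrow> mrg s bs v), filter (\<lambda>x. x \<noteq> s) (case a of (bs, v) \<Rightarrow> mrg s bs v)) = a"
      using l by (simp add: mrg_map mrg_filter)
  qed
  show "\<forall>a'\<in>Wd m (s # ss). (case (map (\<lambda>x. x = s) a', filter (\<lambda>x. x \<noteq> s) a') of (bs, v) \<Rightarrow> mrg s bs v) = a'"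
    by (simp add: mrg_inv)
  show "(\<lambda>(bs, v). mrg s bs v) ` (Pt m (m * Suc (length ss)) \<times> Wd m ss) \<subseteq> Wd m (s # ss)"
  proof
    fix w assume "w \<in> (\<lambda>(bs, v). mrg s bs v) ` (Pt m (m * Suc (length ss)) \<times> Wd m ss)"
    then obtain bs v where w: "w = mrg s bs v" and bs: "bs \<in> Pt m (m * Suc (length ss))" and v: "v \<in> Wd m ss" by auto
    have l: "length v = count_list bs False" using bs v count_bool[of bs] by (auto simp: Pt_def Wd_def)
    show "w \<in> Wd m (s # ss)"
      unfolding Wd_def using mrg_len[OF l, of s] mrg_set[OF l, of s] mrg_count[OF l, of s] bs v assms
      by (auto simp: w Pt_def Wd_def count_list_0_iff)
  qed
  show "(\<lambda>w. (map (\<lambda>x. x = s) w, filter (\<lambda>x. x \<noteq> s) w)) ` Wd m (s # ss) \<subseteq> Pt m (m * Suc (length ss)) \<times> Wd m ss"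
  proof
    fix p assume "p \<in> (\<lambda>w. (map (\<lambda>x. x = s) w, filter (\<lambda>x. x \<noteq> s) w)) ` Wd m (s # ss)"
    then obtain w where p: "p = (map (\<lambda>x. x = s) w, filter (\<lambda>x. x \<noteq> s) w)" and w: "w \<in> Wd m (s#ss)" by auto
    have "length (filter (\<lambda>x. x \<noteq> s) w) = m * length ss"
      using len_filter_ne[of s w] w by (auto simp: Wd_def)
    moreover have "set (filter (\<lambda>x. x \<noteq> s) w) \<subseteq> set ss" using w by (auto simp: Wd_def)
    moreover have "\<forall>i\<in>set ss. count_list (filter (\<lambda>x. x \<noteq> s) w) i = m"
    proof
      fix i assume i: "i \<in> set ss"
      hence "i \<noteq> s" using assms by auto
      thus "count_list (filter (\<lambda>x. x \<noteq> s) w) i = m" using count_filter_ne[of i s w] w i by (auto simp: Wd_def)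
    qed
    ultimately show "p \<in> Pt m (m * Suc (length ss)) \<times> Wd m ss"
      using w count_map_eq[of s w] by (auto simp: p Pt_def Wd_def)
  qed
qed


lemma Pt_0: "Pt m 0 = (if m = 0 then {[]} else {})"
  by (auto simp: Pt_def)

lemma Pt_Suc: "Pt m (Suc f) = (if m = 0 then {} else Cons True ` Pt (m-1) f) \<union> Cons False ` Pt m f"
proof (intro set_eqI iffI)
  fix bs assume "bs \<in> Pt m (Suc f)"
  then obtain b bs' where bs: "bs = b # bs'" unfolding Pt_def by (cases bs) auto
  show "bs \<in> (if m = 0 then {} else Cons True ` Pt (m-1) f) \<union> Cons False ` Pt m f"
    using \<open>bs \<in> Pt m (Suc f)\<close> unfolding bs by (cases b) (auto simp: Pt_def)
qed (auto simp: Pt_def split: if_splits)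

lemma sum_Pt_Suc: "sum g (Pt m (Suc f)) =
   (if m = 0 then 0 else sum (\<lambda>bs. g (True#bs)) (Pt (m-1) f)) + sum (\<lambda>bs. g (False#bs)) (Pt m f)"
proof -
  have d: "(if m = 0 then {} else Cons True ` Pt (m-1) f) \<inter> Cons False ` Pt m f = {}" by auto
  have "sum g (Pt m (Suc f)) = sum g (if m = 0 then {} else Cons True ` Pt (m-1) f) + sum g (Cons False ` Pt m f)"
    unfolding Pt_Suc by (rule sum.union_disjoint) (auto simp: finite_Pt)
  also have "sum g (Cons False ` Pt m f) = sum (\<lambda>bs. g (False#bs)) (Pt m f)"
    by (subst sum.reindex) (auto simp: inj_on_def)
  also have "sum g (if m = 0 then {} else Cons True ` Pt (m-1) f) = (if m = 0 then 0 else sum (\<lambda>bs. g (True#bs)) (Pt (m-1) f))"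
    by (auto simp: sum.reindex inj_on_def)
  finally show ?thesis .
qed

lemma card_Pt: "card (Pt m f) = f choose m"
proof (induction f arbitrary: m)
  case 0 then show ?case by (simp add: Pt_0)
next
  case (Suc f)
  have "card (Pt m (Suc f)) = sum (\<lambda>_. 1) (Pt m (Suc f))" by simp
  also have "\<dots> = (if m = 0 then 0 else f choose (m-1)) + (f choose m)"
    unfolding sum_Pt_Suc using Suc by simp
  also have "\<dots> = Suc f choose m" by (cases m) auto
  finally show ?case .
qed

lemma sum_count_False: "sum (\<lambda>bs. count_list bs False) (Pt m f) = (f - m) * (f choose m)"
proof -
  have "sum (\<lambda>bs. count_list bs False) (Pt m f) = sum (\<lambda>_. f - m) (Pt m f)"
    by (rule sum.cong) (auto simp: Pt_def dest: arg_cong[where f="\<lambda>x. x - m"] simp: count_bool[symmetric])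
  thus ?thesis by (simp add: card_Pt)
qed

lemma sum_ht: "c \<le> f \<Longrightarrow> sum (\<lambda>bs. if ht c bs then 1 else 0) (Pt m f) + (c choose m) = (f choose m)"
proof (induction f arbitrary: m c)
  case 0 then show ?case by (auto simp: Pt_0)
next
  case (Suc f)
  show ?case
  proof (cases c)
    case 0
    have "sum (\<lambda>bs. if ht c bs then 1 else 0::nat) (Pt m (Suc f)) =
        (if m = 0 then 0 else f choose (m-1)) + sum (\<lambda>bs. if ht 0 bs then 1 else 0) (Pt m f)"
      unfolding sum_Pt_Suc 0 by (simp add: card_Pt)
    then show ?thesis using Suc.IH[of 0 m] 0 by (cases m) auto
  next
    case (Suc c')
    have eq: "sum (\<lambda>bs. if ht c bs then 1 else 0::nat) (Pt m (Suc f)) =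
        (if m = 0 then 0 else sum (\<lambda>bs. if ht c' bs then 1 else 0) (Pt (m-1) f)) + sum (\<lambda>bs. if ht c' bs then 1 else 0) (Pt m f)"
      unfolding sum_Pt_Suc Suc by simp
    have c': "c' \<le> f" using Suc.prems Suc by simp
    show ?thesis
    proof (cases m)
      case 0
      have b: "(c choose m) = 1" "(Suc f choose m) = 1" "(c' choose m) = 1" "(f choose m) = 1" using 0 by auto
      have z: "(if m = 0 then 0 else sum (\<lambda>bs. if ht c' bs then 1 else 0) (Pt (m-1) f)) = (0::nat)" using 0 by simp
      have i: "sum (\<lambda>bs. if ht c' bs then 1 else 0) (Pt m f) + (c' choose m) = (f choose m)" using Suc.IH[OF c', of m] .
      from eq z have "sum (\<lambda>bs. if ht c bs then 1 else 0::nat) (Pt m (Suc f)) = sum (\<lambda>bs. if ht c' bs then 1 else 0) (Pt m f)" by simp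
      with i b show ?thesis by simp
    next
      case (Suc k)
      have h1: "sum (\<lambda>bs. if ht c' bs then 1 else 0) (Pt k f) + (c' choose k) = (f choose k)"
        using Suc.IH[OF c', of k] .
      have h2: "sum (\<lambda>bs. if ht c' bs then 1 else 0) (Pt m f) + (c' choose m) = (f choose m)"
        using Suc.IH[OF c', of m] .
      show ?thesis using eq h1 h2 \<open>c = Suc c'\<close> Suc by simp
    qed
  qed
qed


lemma binom_id1: "(f - k) * (f choose k) = Suc k * (f choose Suc k)"
  by (metis binomial_absorb_comp Suc_times_binomial_eq binomial_Suc_Suc diff_Suc_1 mult.commute
        Suc_diff_le binomial_eq_0 le_SucI not_le diff_is_0_eq mult_0 times_binomial_minus1_eq zero_less_Suc)

lemma sum_tf: "c \<le> f \<Longrightarrow> sum (tf c) (Pt m f) + (f choose Suc m) = (f - c) * ((f - 1) choose m) + (c choose Suc m)"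
proof (induction f arbitrary: m c)
  case 0 then show ?case by (auto simp: Pt_0)
next
  case (Suc f)
  show ?case
  proof (cases c)
    case 0
    have eq: "sum (tf c) (Pt m (Suc f)) =
        (if m = 0 then 0 else sum (\<lambda>bs. count_list bs False) (Pt (m-1) f)) + sum (tf 0) (Pt m f)"
      unfolding sum_Pt_Suc 0 by simp
    have i: "sum (tf 0) (Pt m f) + (f choose Suc m) = f * ((f - 1) choose m)" using Suc.IH[of 0 m] by simp
    show ?thesis
    proof (cases m)
      case 0
      with eq i show ?thesis using \<open>c = 0\<close> by simp
    next
      case (Suc k)
      have e2: "sum (\<lambda>bs. count_list bs False) (Pt (m-1) f) = (f - k) * (f choose k)"
        using sum_count_False[of k f] Suc by simp
      have a1: "(f - k) * (f choose k) = Suc k * (f choose Suc k)" by (rule binom_id1)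
      have a2: "f * ((f - 1) choose Suc k) = (f - Suc k) * (f choose Suc k)" using binomial_absorb_comp[of f "Suc k"] by simp
      have a3: "(Suc f choose Suc m) = (f choose m) + (f choose Suc m)" by simp
      have a4: "Suc k * (f choose Suc k) + (f - Suc k) * (f choose Suc k) + (f choose Suc k) = Suc f * (f choose Suc k)"
      proof (cases "Suc k \<le> f")
        case True
        have "Suc k * (f choose Suc k) + (f - Suc k) * (f choose Suc k) = (Suc k + (f - Suc k)) * (f choose Suc k)"
          by (simp only: add_mult_distrib)
        also have "Suc k + (f - Suc k) = f" using True by simp
        finally show ?thesis by simp
      next
        case False then have z: "(f choose Suc k) = 0" by simp
        show ?thesis unfolding z by simp
      qed
      show ?thesis using eq i e2 a1 a2 a3 a4 \<open>c = 0\<close> Suc by simp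
    qed
  next
    case (Suc c')
    have c': "c' \<le> f" using Suc.prems Suc by simp
    have eq: "sum (tf c) (Pt m (Suc f)) =
        (if m = 0 then 0 else sum (tf c') (Pt (m-1) f)) + sum (tf c') (Pt m f)"
      unfolding sum_Pt_Suc Suc by simp
    have i: "sum (tf c') (Pt m f) + (f choose Suc m) = (f - c') * ((f - 1) choose m) + (c' choose Suc m)"
      using Suc.IH[OF c', of m] .
    show ?thesis
    proof (cases m)
      case 0
      with eq i show ?thesis using \<open>c = Suc c'\<close> c' by simp
    next
      case (Suc k)
      have i2: "sum (tf c') (Pt k f) + (f choose Suc k) = (f - c') * ((f - 1) choose k) + (c' choose Suc k)"
        using Suc.IH[OF c', of k] .
      have p: "(f - c') * ((f-1) choose Suc k) + (f - c') * ((f-1) choose k) = (f - c') * (f choose Suc k)"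
      proof (cases f)
        case 0 then show ?thesis using c' by simp
      next
        case (Suc g) then show ?thesis by (simp add: add_mult_distrib2[symmetric])
      qed
      show ?thesis using eq i i2 p \<open>c = Suc c'\<close> Suc by simp
    qed
  qed
qed


lemma tf_nht: "\<not> ht c bs \<Longrightarrow> tf c bs = 0"
  by (induction c bs rule: ht.induct) auto

lemma pat_ineq:
  assumes m: "1 \<le> m" "m \<le> f" and c: "c \<le> f"
  shows "(\<Sum>bs\<in>Pt m f. if ht c bs then 1 + real (m+1) * real (tf c bs) / real (f - m) else 0)
     \<le> real (m+1) * real (f - c) / real f * real (f choose m)"
proof -
  define K where "K = real (m+1) / real (f - m)"
  have "(\<Sum>bs\<in>Pt m f. if ht c bs then 1 + real (m+1) * real (tf c bs) / real (f - m) else 0)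
      = (\<Sum>bs\<in>Pt m f. real (if ht c bs then 1 else 0) + K * real (tf c bs))"
    by (rule sum.cong) (auto simp: K_def tf_nht)
  also have "\<dots> = real (\<Sum>bs\<in>Pt m f. if ht c bs then 1 else 0) + K * real (sum (tf c) (Pt m f))"
    by (simp add: sum.distrib sum_distrib_left)
  finally have L: "(\<Sum>bs\<in>Pt m f. if ht c bs then 1 + real (m+1) * real (tf c bs) / real (f - m) else 0)
      = real (\<Sum>bs\<in>Pt m f. if ht c bs then 1 else 0) + K * real (sum (tf c) (Pt m f))" .
  define C where "C = real (f choose m)"
  define Cc where "Cc = real (c choose m)"
  have A: "real (\<Sum>bs\<in>Pt m f. if ht c bs then 1 else 0) = C - Cc"
    using sum_ht[OF c, of m] unfolding C_def Cc_def by (metis add_diff_cancel_right' of_nat_add)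
  have B: "real (sum (tf c) (Pt m f)) = real (f - c) * real ((f - 1) choose m) + real (c choose Suc m) - real (f choose Suc m)"
    using sum_tf[OF c, of m] by (metis add_diff_cancel_right' of_nat_add of_nat_mult)
  have i1: "real f * real ((f - 1) choose m) = real (f - m) * C"
    using binomial_absorb_comp[of f m] unfolding C_def by (metis of_nat_mult)
  have i2: "real (Suc m) * real (f choose Suc m) = real (f - m) * C"
    using binom_id1[of f m] unfolding C_def by (metis of_nat_mult)
  have i3: "real (Suc m) * real (c choose Suc m) = real (c - m) * Cc"
    using binom_id1[of c m] unfolding Cc_def by (metis of_nat_mult)
  have fpos: "real f > 0" using m by simp
  have C0: "C \<ge> 0" "Cc \<ge> 0" unfolding C_def Cc_def by auto
  show ?thesis
  proof (cases "f = m")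
    case True
    hence K0: "K = 0" unfolding K_def by simp
    have C1: "C = 1" unfolding C_def True by simp
    show ?thesis
    proof (cases "c = m")
      case True
      then show ?thesis unfolding L K0 A C1 Cc_def using \<open>f = m\<close> by simp
    next
      case False
      hence "c < m" using c \<open>f = m\<close> by simp
      hence Cc0: "Cc = 0" unfolding Cc_def by simp
      have "1 \<le> real (f - c)" using \<open>c < m\<close> \<open>f = m\<close> by simp
      hence "real (m+1) * 1 \<le> real (m+1) * real (f - c)" by (intro mult_left_mono) auto
      moreover have "real f \<le> real (m+1) * 1" using \<open>f = m\<close> by simp
      ultimately have "real f \<le> real (m+1) * real (f - c)" by linarith
      hence "1 \<le> real (m+1) * real (f - c) / real f" by (subst le_divide_eq_1_pos[OF fpos])
      moreover have C1': "real (f choose m) = 1" using C1 unfolding C_def .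
      ultimately show ?thesis unfolding L K0 A C1 Cc0 C1' using c by simp
    qed
  next
    case False
    hence D: "real (f - m) > 0" using m by simp
    have "K * real (sum (tf c) (Pt m f)) = (real (Suc m) * (real (f - c) * real ((f - 1) choose m)) + real (Suc m) * real (c choose Suc m) - real (Suc m) * real (f choose Suc m)) / real (f - m)"
      unfolding K_def B using D by (simp add: field_simps)
    also have "\<dots> = (real (Suc m) * real (f - c) * (real (f - m) * C / real f) + real (c - m) * Cc - real (f - m) * C) / real (f - m)"
    proof -
      have "real ((f - 1) choose m) = real (f - m) * C / real f" using i1 fpos by (simp add: field_simps)
      thus ?thesis using i2 i3 by (simp add: algebra_simps add_divide_distrib)
    qed
    also have "\<dots> = real (Suc m) * real (f - c) * C / real f + real (c - m) * Cc / real (f - m) - C"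
      using D by (simp add: field_simps)
    finally have KB: "K * real (sum (tf c) (Pt m f)) = real (Suc m) * real (f - c) * C / real f + real (c - m) * Cc / real (f - m) - C" .
    have "real (c - m) \<le> real (f - m)" using c by simp
    hence "real (c - m) / real (f - m) \<le> 1" using D by simp
    hence "(real (c - m) / real (f - m)) * Cc \<le> 1 * Cc" using C0 by (intro mult_right_mono) auto
    hence "real (c - m) * Cc / real (f - m) \<le> Cc" by simp
    then show ?thesis unfolding L A KB C_def by simp
  qed
qed


lemma main_ineq:
  assumes "distinct ss" "1 \<le> m" "c \<le> m * length ss"
  shows "real (\<Sum>w\<in>Wd m ss. gr ss (drop c w))
     \<le> real (m+1) * real (m * length ss - c) / real (m * length ss) * real (card (Wd m ss))"
  using assms
proof (induction ss arbitrary: c)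
  case Nil
  then show ?case by simp
next
  case (Cons s ss)
  define f where "f = m * Suc (length ss)"
  define k where "k = m * length ss"
  have fk: "f - m = k" "m \<le> f" unfolding f_def k_def by simp_all
  have sn: "s \<notin> set ss" "distinct ss" using Cons.prems by auto
  have bij: "bij_betw (\<lambda>(bs,v). mrg s bs v) (Pt m f \<times> Wd m ss) (Wd m (s#ss))"
    unfolding f_def by (rule bij_Wd[OF sn(1)])
  have lenv: "length v = count_list bs False" if "bs \<in> Pt m f" "v \<in> Wd m ss" for bs v
    using that count_bool[of bs] fk by (auto simp: Pt_def Wd_def f_def k_def)
  have snv: "s \<notin> set v" if "v \<in> Wd m ss" for v using that sn by (auto simp: Wd_def)
  have "(\<Sum>w\<in>Wd m (s#ss). gr (s#ss) (drop c w)) = (\<Sum>p\<in>Pt m f \<times> Wd m ss. gr (s#ss) (drop c ((\<lambda>(bs,v). mrg s bs v) p)))"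
    by (rule sum.reindex_bij_betw[OF bij, symmetric])
  also have "\<dots> = (\<Sum>bs\<in>Pt m f. \<Sum>v\<in>Wd m ss. gr (s#ss) (drop c (mrg s bs v)))"
    by (simp add: sum.cartesian_product split_def)
  also have "\<dots> = (\<Sum>bs\<in>Pt m f. \<Sum>v\<in>Wd m ss. if ht c bs then Suc (gr ss (drop (cp c bs) v)) else 0)"
    by (intro sum.cong refl) (simp add: gr_mrg snv sn lenv)
  finally have E: "(\<Sum>w\<in>Wd m (s#ss). gr (s#ss) (drop c w)) = (\<Sum>bs\<in>Pt m f. \<Sum>v\<in>Wd m ss. if ht c bs then Suc (gr ss (drop (cp c bs) v)) else 0)" .
  define W where "W = real (card (Wd m ss))"
  have step: "real (\<Sum>v\<in>Wd m ss. if ht c bs then Suc (gr ss (drop (cp c bs) v)) else 0)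
     \<le> W * (if ht c bs then 1 + real (m+1) * real (tf c bs) / real (f - m) else 0)" if bs: "bs \<in> Pt m f" for bs
  proof (cases "ht c bs")
    case True
    have cf: "cp c bs + tf c bs = k" using ht_tf[OF True] bs count_bool[of bs] fk by (auto simp: Pt_def)
    have IH: "real (\<Sum>v\<in>Wd m ss. gr ss (drop (cp c bs) v)) \<le> real (m+1) * real (k - cp c bs) / real k * W"
      using Cons.IH[OF sn(2) Cons.prems(2), of "cp c bs"] cf unfolding k_def W_def by simp
    have "real (\<Sum>v\<in>Wd m ss. if ht c bs then Suc (gr ss (drop (cp c bs) v)) else 0)
        = W + real (\<Sum>v\<in>Wd m ss. gr ss (drop (cp c bs) v))" using True by (simp add: sum.distrib W_def)
    also have "\<dots> \<le> W + real (m+1) * real (tf c bs) / real (f - m) * W" proof -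
      have t: "k - cp c bs = tf c bs" using cf by simp
      show ?thesis using IH unfolding t fk(1) by simp
    qed
    finally show ?thesis using True by (simp add: algebra_simps)
  next
    case False then show ?thesis by simp
  qed
  have "real (\<Sum>w\<in>Wd m (s#ss). gr (s#ss) (drop c w))
     \<le> (\<Sum>bs\<in>Pt m f. W * (if ht c bs then 1 + real (m+1) * real (tf c bs) / real (f - m) else 0))"
    unfolding E of_nat_sum by (rule sum_mono) (use step in simp)
  also have "\<dots> = W * (\<Sum>bs\<in>Pt m f. if ht c bs then 1 + real (m+1) * real (tf c bs) / real (f - m) else 0)"
    by (simp add: sum_distrib_left)
  also have "\<dots> \<le> W * (real (m+1) * real (f - c) / real f * real (f choose m))"
    using pat_ineq[OF Cons.prems(2) fk(2), of c] Cons.prems(3) unfolding f_def W_def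
    by (intro mult_left_mono) auto
  also have "\<dots> = real (m+1) * real (f - c) / real f * real (card (Wd m (s#ss)))"
  proof -
    have "card (Wd m (s#ss)) = card (Pt m f \<times> Wd m ss)" using bij_betw_same_card[OF bij] by simp
    also have "\<dots> = (f choose m) * card (Wd m ss)" by (simp add: card_cartesian_product card_Pt)
    finally show ?thesis unfolding W_def by simp
  qed
  finally show ?case unfolding f_def by simp
qed


lemma words_Wd: "words m n = Wd m [1..<n+1]"
proof -
  have "set [1..<n+1] = {1..n}" by auto
  thus ?thesis unfolding words_def Wd_def by (simp del: upt_Suc)
qed

lemma Lexp_le: assumes "1 \<le> m" "1 \<le> n" shows "Lexp m n \<le> real m + 1"
proof -
  have "distinct [1..<n+1]" by simp
  from main_ineq[OF this assms(1), of 0]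
  have M: "real (\<Sum>w\<in>words m n. gr [1..<n+1] w) \<le> real (m+1) * real (card (words m n))"
    using assms by (simp add: words_Wd del: upt_Suc)
  have "(\<Sum>w\<in>words m n. real (Lword w)) = real (\<Sum>w\<in>words m n. gr [1..<n+1] w)"
    unfolding of_nat_sum by (intro sum.cong refl) (auto simp: words_def Lword_gr simp del: upt_Suc)
  hence S: "(\<Sum>w\<in>words m n. real (Lword w)) \<le> real (m+1) * real (card (words m n))" using M by simp
  show ?thesis
  proof (cases "card (words m n) = 0")
    case True then show ?thesis unfolding Lexp_def by simp
  next
    case False
    then show ?thesis unfolding Lexp_def using S by (simp add: divide_le_eq add.commute)
  qed
qed

theorem corollary4p2:
  shows "\<exists>C::real. \<forall>m::nat. m \<ge> 2 \<longrightarrow> (\<exists>N::nat. \<forall>n\<ge>N.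
           Lexp m n \<le> real m + C * real m powr (3/4) * ln (real m))"
proof (intro exI allI impI)
  fix m :: nat and n :: nat
  assume m: "m \<ge> 2" and n: "n \<ge> 1"
  have "ln (1/2::real) \<le> 1/2 - 1" by (rule ln_le_minus_one) simp
  hence l2: "ln (2::real) \<ge> 1/2" by (simp add: ln_div)
  have "ln (real m) \<ge> ln 2" using m by simp
  hence lm: "ln (real m) \<ge> 1/2" using l2 by linarith
  have pm: "real m powr (3/4) \<ge> 1" by (rule ge_one_powr_ge_zero) (use m in auto)
  have "1 \<le> 2 * real m powr (3/4) * ln (real m)"
  proof -
    have "2 * 1 * (1/2) \<le> 2 * real m powr (3/4) * ln (real m)"
      using pm lm by (intro mult_mono) auto
    thus ?thesis by simp
  qed
  moreover have "Lexp m n \<le> real m + 1" using Lexp_le m n by simp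
  ultimately show "Lexp m n \<le> real m + 2 * real m powr (3/4) * ln (real m)" by linarith
qed

end
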